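(* For an integer $d\ge 2$ and density matrices $\rho,\sigma$ on $\mathbb{C}^d$, let $$\mathcal{F}_C^{(d)}(\rho,\sigma)=\frac{1-r}{2}+\frac{1+r}{2}\left[\operatorname{tr}(\rho\sigma)+\sqrt{1-\operatorname{tr}(\rho^2)}\sqrt{1-\operatorname{tr}(\sigma^2)}\right],\qquad r=\frac{1}{d-1}.$$ Then for all integers $d_1,d_2\ge 2$, all density matrices $\rho_1,\sigma_1$ on $\mathbb{C}^{d_1}$ and $\rho_2,\sigma_2$ on $\mathbb{C}^{d_2}$, $$\mathcal{F}_C^{(d_1d_2)}(\rho_1\otimes\rho_2,\sigma_1\otimes\sigma_2)\ge\mathcal{F}_C^{(d_1)}(\rho_1,\sigma_1)\,\mathcal{F}_C^{(d_2)}(\rho_2,\sigma_2).$$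
   Context: A density matrix is a positive semidefinite matrix of unit trace. $\mathcal{F}_C$ is the fidelity of Chen et al., where $d$ is the dimension of the state space. *)

theory Defs
  imports "HOL-Analysis.Analysis"
begin

text \<open>Square complex matrices on C^d are modelled as complex^'n^'n with d = CARD('n).\<close>

definition quad_form :: "complex^'n^'n \<Rightarrow> complex^'n \<Rightarrow> complex" where
  "quad_form A x = (\<Sum>i\<in>UNIV. \<Sum>j\<in>UNIV. cnj (x$i) * A$i$j * x$j)"

definition psd :: "complex^'n^'n \<Rightarrow> bool" where
  "psd A \<longleftrightarrow> (\<forall>x. Im (quad_form A x) = 0 \<and> Re (quad_form A x) \<ge> 0)"

definition density_matrix :: "complex^'n^'n \<Rightarrow> bool" where
  "density_matrix A \<longleftrightarrow> psd A \<and> trace A = 1"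

definition kron :: "complex^'n^'n \<Rightarrow> complex^'m^'m \<Rightarrow> complex^('n \<times> 'm)^('n \<times> 'm)" where
  "kron A B = (\<chi> p q. A$(fst p)$(fst q) * B$(snd p)$(snd q))"

definition fidelity_C :: "complex^'n^'n \<Rightarrow> complex^'n^'n \<Rightarrow> real" where
  "fidelity_C \<rho> \<sigma> =
     (let r = 1 / (real CARD('n) - 1) in
      (1 - r) / 2 + (1 + r) / 2 *
        (Re (trace (\<rho> ** \<sigma>)) + sqrt (1 - Re (trace (\<rho> ** \<rho>))) * sqrt (1 - Re (trace (\<sigma> ** \<sigma>)))))"

end

theory Submission
  imports Defs
begin


lemma cs3: fixes aa bb cc xx yy zz :: real
  assumes "aa \<ge> 0" "bb \<ge> 0" "cc \<ge> 0" "xx \<ge> 0" "yy \<ge> 0" "zz \<ge> 0"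
  shows "aa * xx + bb * yy + cc * zz \<le> sqrt (aa^2+bb^2+cc^2)  *  sqrt (xx^2+yy^2+zz^2)"
proof -
  have "(aa * xx + bb * yy + cc * zz)^2 \<le> (aa^2+bb^2+cc^2)  *  (xx^2+yy^2+zz^2)"
  proof -
    have "(aa^2+bb^2+cc^2)  *  (xx^2+yy^2+zz^2) - (aa * xx + bb * yy + cc * zz)^2
      = (aa * yy-bb * xx)^2 + (aa * zz-cc * xx)^2 + (bb * zz-cc * yy)^2"
      by (simp add: power2_eq_square algebra_simps)
    moreover have "(aa * yy-bb * xx)^2 + (aa * zz-cc * xx)^2 + (bb * zz-cc * yy)^2 \<ge> 0" by simp
    ultimately show ?thesis by linarith
  qed
  then show ?thesis by (metis real_le_rsqrt real_sqrt_mult)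
qed

lemma cs2: fixes a1 a2 b1 b2 :: real
  shows "a1 * b1 + a2 * b2 \<le> sqrt (a1^2+a2^2)  *  sqrt (b1^2+b2^2)"
proof -
  have "(a1 * b1 + a2 * b2)^2 \<le> (a1^2+a2^2)  *  (b1^2+b2^2)"
  proof -
    have "(a1^2+a2^2)  *  (b1^2+b2^2) - (a1 * b1 + a2 * b2)^2 = (a1 * b2-a2 * b1)^2"
      by (simp add: power2_eq_square algebra_simps)
    then show ?thesis by (metis diff_ge_0_iff_ge zero_le_power2)
  qed
  then show ?thesis by (metis real_le_rsqrt real_sqrt_mult)
qed

lemma bilin: fixes m1 m2 C1 C2 :: real
  assumes "m1 \<ge> 1" "m2 \<ge> 1" "\<bar>C1\<bar> \<le> m1" "\<bar>C2\<bar> \<le> m2"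
  shows "(m1 + C1)/(2 * m1)  *  ((m2 + C2)/(2 * m2)) \<le> (m1+m2+m1 * m2 + C1 + C2 + C1 * C2)/(2 * (m1+m2+m1 * m2))"
proof -
  define s where "s = (m1 + C1)/(2 * m1)"
  define t where "t = (m2 + C2)/(2 * m2)"
  have s0: "s \<ge> 0" "s \<le> 1" using assms unfolding s_def by (auto simp: field_simps)
  have t0: "t \<ge> 0" "t \<le> 1" using assms unfolding t_def by (auto simp: field_simps)
  have C1: "C1 = 2 * m1 * s - m1" using assms unfolding s_def by (auto simp: field_simps)
  have C2: "C2 = 2 * m2 * t - m2" using assms unfolding t_def by (auto simp: field_simps)
  define M where "M = m1+m2+m1 * m2"
  have M0: "M > 0" using assms unfolding M_def by (smt (verit) mult_nonneg_nonneg)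
  have key: "M + C1 + C2 + C1 * C2 - 2 * M * s * t = 2 * (m1 * m2 * (1-s) * (1-t) + m1 * s * (1-t) + m2 * t * (1-s))"
    unfolding C1 C2 M_def by (simp add: algebra_simps)
  have "m1 * m2 * (1-s) * (1-t) + m1 * s * (1-t) + m2 * t * (1-s) \<ge> 0"
    using assms s0 t0 by (intro add_nonneg_nonneg mult_nonneg_nonneg) auto
  then have "s * t \<le> (M + C1 + C2 + C1 * C2)/(2 * M)"
    using key M0 by (simp add: field_simps)
  then show ?thesis unfolding s_def t_def M_def by simp
qed

lemma core: fixes m1 m2 x1 y1 u1 v1 x2 y2 u2 v2 W1 W2 :: real
  assumes m: "m1 \<ge> 1" "m2 \<ge> 1"
  and nn: "x1 \<ge> 0" "y1 \<ge> 0" "u1 \<ge> 0" "v1 \<ge> 0" "x2 \<ge> 0" "y2 \<ge> 0" "u2 \<ge> 0" "v2 \<ge> 0"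
  and e: "m1 = x1^2 + u1^2" "m1 = y1^2 + v1^2" "m2 = x2^2 + u2^2" "m2 = y2^2 + v2^2"
  and w: "\<bar>W1\<bar> \<le> x1 * y1" "\<bar>W2\<bar> \<le> x2 * y2"
  shows "(m1+W1+u1 *  v1)/(2 * m1)  *  ((m2+W2+u2 *  v2)/(2 * m2)) \<le>
    (m1+m2+m1 * m2 + (W1+W2+W1 * W2) + sqrt (u1^2+u2^2+(x1^2 * u2^2+u1^2 * x2^2+u1^2 * u2^2))  *  sqrt (v1^2+v2^2+(y1^2 *  v2^2+v1^2 * y2^2+v1^2 *  v2^2)))
     / (2 * (m1+m2+m1 * m2))"
proof -
  define C1 where "C1 = W1 + u1 *  v1"
  define C2 where "C2 = W2 + u2 *  v2"
  have G: "W1 * (u2 *  v2) + W2 * (u1 *  v1) + (u1 *  v1) * (u2 *  v2) \<le> sqrt (x1^2 * u2^2+u1^2 * x2^2+u1^2 * u2^2)  *  sqrt (y1^2 *  v2^2+v1^2 * y2^2+v1^2 *  v2^2)"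
  proof -
    have "W1 * (u2 *  v2) \<le> (x1 * u2) * (y1 *  v2)"
      proof -
      have "W1 * (u2 *  v2) \<le> \<bar>W1\<bar> * (u2 *  v2)" using nn by (intro mult_right_mono) auto
      also have "\<dots> \<le> (x1 * y1) * (u2 *  v2)" using nn w by (intro mult_right_mono) auto
      finally show ?thesis by (simp add: algebra_simps)
    qed
    moreover have "W2 * (u1 *  v1) \<le> (u1 * x2) * (v1 * y2)"
      proof -
      have "W2 * (u1 *  v1) \<le> \<bar>W2\<bar> * (u1 *  v1)" using nn by (intro mult_right_mono) auto
      also have "\<dots> \<le> (x2 * y2) * (u1 *  v1)" using nn w by (intro mult_right_mono) auto
      finally show ?thesis by (simp add: algebra_simps)
    qed
    moreover have "(x1 * u2) * (y1 *  v2) + (u1 * x2) * (v1 * y2) + (u1 * u2) * (v1 *  v2) \<le> sqrt ((x1 * u2)^2+(u1 * x2)^2+(u1 * u2)^2)  *  sqrt ((y1 *  v2)^2+(v1 * y2)^2+(v1 *  v2)^2)"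
      by (rule cs3) (use nn in auto)
    ultimately show ?thesis by (simp add: power_mult_distrib algebra_simps)
  qed
  have S: "u1 *  v1 + u2 *  v2 + sqrt (x1^2 * u2^2+u1^2 * x2^2+u1^2 * u2^2)  *  sqrt (y1^2 *  v2^2+v1^2 * y2^2+v1^2 *  v2^2)
     \<le> sqrt (u1^2+u2^2+(x1^2 * u2^2+u1^2 * x2^2+u1^2 * u2^2))  *  sqrt (v1^2+v2^2+(y1^2 *  v2^2+v1^2 * y2^2+v1^2 *  v2^2))"
    using cs3[where aa=u1 and xx=v1 and bb=u2 and yy=v2 and cc="sqrt (x1^2 * u2^2+u1^2 * x2^2+u1^2 * u2^2)" and zz="sqrt (y1^2 *  v2^2+v1^2 * y2^2+v1^2 *  v2^2)"] nn
    by simp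
  have low: "m1+m2+m1 * m2 + C1 + C2 + C1 * C2 \<le> m1+m2+m1 * m2 + (W1+W2+W1 * W2) + sqrt (u1^2+u2^2+(x1^2 * u2^2+u1^2 * x2^2+u1^2 * u2^2))  *  sqrt (v1^2+v2^2+(y1^2 *  v2^2+v1^2 * y2^2+v1^2 *  v2^2))"
    using G S unfolding C1_def C2_def by (simp add: algebra_simps)
  have xy1: "x1 * y1 + u1 *  v1 \<le> m1"
    using cs2[of x1 y1 u1 v1] e(1,2)[symmetric] m by simp
  have xy2: "x2 * y2 + u2 *  v2 \<le> m2"
    using cs2[of x2 y2 u2 v2] e(3,4)[symmetric] m by simp
  have b1: "\<bar>C1\<bar> \<le> m1"
  proof -
    have "x1 * y1 \<le> m1" using xy1 nn by (smt (verit) mult_nonneg_nonneg)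
    then show ?thesis unfolding C1_def using xy1 w nn mult_nonneg_nonneg[of u1 v1] by linarith
  qed
  have b2: "\<bar>C2\<bar> \<le> m2"
  proof -
    have "x2 * y2 \<le> m2" using xy2 nn by (smt (verit) mult_nonneg_nonneg)
    then show ?thesis unfolding C2_def using xy2 w nn mult_nonneg_nonneg[of u2 v2] by linarith
  qed
  have M0: "m1+m2+m1 * m2 > 0" using m by (smt (verit) mult_nonneg_nonneg)
  have "(m1+W1+u1 *  v1)/(2 * m1)  *  ((m2+W2+u2 *  v2)/(2 * m2)) \<le> (m1+m2+m1 * m2 + C1 + C2 + C1 * C2)/(2 * (m1+m2+m1 * m2))"
    using bilin[OF m b1 b2] unfolding C1_def C2_def by (simp add: algebra_simps)
  also have "\<dots> \<le> (m1+m2+m1 * m2 + (W1+W2+W1 * W2) + sqrt (u1^2+u2^2+(x1^2 * u2^2+u1^2 * x2^2+u1^2 * u2^2))  *  sqrt (v1^2+v2^2+(y1^2 *  v2^2+v1^2 * y2^2+v1^2 *  v2^2))) / (2 * (m1+m2+m1 * m2))" using low M0 by (intro divide_right_mono) auto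
  finally show ?thesis .
qed
definition FC :: "real \<Rightarrow> real \<Rightarrow> real \<Rightarrow> real \<Rightarrow> real" where
  "FC d a p q = (let r = 1 / (d - 1) in (1 - r) / 2 + (1 + r) / 2  *  (a + sqrt (1 - p)  *  sqrt (1 - q)))"

lemma frac_aux: fixes m b c X :: real assumes "m \<noteq> 0"
  shows "b/m/2 + c/m/2 * X = (b + c * X)/(2 * m)"
  using assms by (simp add: field_simps)

lemma FC_alt:
  assumes "d \<ge> 2"
  shows "FC d a p q = ((d-1) + (d * a-1) + sqrt (d * (1-p))  *  sqrt (d * (1-q))) / (2 * (d-1))"
proof -
  have d1: "d - 1 \<noteq> 0" "d \<noteq> 1" using assms by auto
  have sq: "sqrt (d * (1-p))  *  sqrt (d * (1-q)) = d  *  (sqrt (1-p)  *  sqrt (1-q))"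
    using assms by (simp add: real_sqrt_mult)
  have r: "1 - 1/(d-1) = (d-2)/(d-1)" "1 + 1/(d-1) = d/(d-1)" using d1 by (simp_all add: field_simps)
  have "FC d a p q = (d-2)/(d-1)/2 + d/(d-1)/2  *  (a + sqrt (1-p)  *  sqrt (1-q))"
    unfolding FC_def Let_def r ..
  also have "\<dots> = ((d-2) + d * (a + sqrt (1-p)  *  sqrt (1-q)))/(2 * (d-1))"
    using frac_aux[OF d1(1)] .
  also have "(d-2) + d * (a + sqrt (1-p)  *  sqrt (1-q)) = (d-1) + (d * a-1) + sqrt (d * (1-p))  *  sqrt (d * (1-q))"
    unfolding sq by (simp add: algebra_simps)
  finally show ?thesis .
qed

lemma scalar:
  fixes d1 d2 a1 p1 q1 a2 p2 q2 :: real
  assumes d: "d1 \<ge> 2" "d2 \<ge> 2"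
  and p1: "1 \<le> d1 * p1" "p1 \<le> 1" and q1: "1 \<le> d1 * q1" "q1 \<le> 1"
  and p2: "1 \<le> d2 * p2" "p2 \<le> 1" and q2: "1 \<le> d2 * q2" "q2 \<le> 1"
  and w1: "(d1 * a1 - 1)^2 \<le> (d1 * p1 - 1) * (d1 * q1 - 1)"
  and w2: "(d2 * a2 - 1)^2 \<le> (d2 * p2 - 1) * (d2 * q2 - 1)"
  shows "FC d1 a1 p1 q1  *  FC d2 a2 p2 q2 \<le> FC (d1 * d2) (a1 * a2) (p1 * p2) (q1 * q2)"
proof -
  define x1 where "x1 = sqrt (d1 * p1 - 1)"
  define y1 where "y1 = sqrt (d1 * q1 - 1)"
  define u1 where "u1 = sqrt (d1 * (1-p1))"
  define v1 where "v1 = sqrt (d1 * (1-q1))"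
  define x2 where "x2 = sqrt (d2 * p2 - 1)"
  define y2 where "y2 = sqrt (d2 * q2 - 1)"
  define u2 where "u2 = sqrt (d2 * (1-p2))"
  define v2 where "v2 = sqrt (d2 * (1-q2))"
  have nn: "x1 \<ge> 0" "y1 \<ge> 0" "u1 \<ge> 0" "v1 \<ge> 0" "x2 \<ge> 0" "y2 \<ge> 0" "u2 \<ge> 0" "v2 \<ge> 0"
    unfolding x1_def y1_def u1_def v1_def x2_def y2_def u2_def v2_def using d p1 q1 p2 q2 by auto
  have sq: "x1^2 = d1 * p1 - 1" "y1^2 = d1 * q1 - 1" "u1^2 = d1 * (1-p1)" "v1^2 = d1 * (1-q1)"
     "x2^2 = d2 * p2 - 1" "y2^2 = d2 * q2 - 1" "u2^2 = d2 * (1-p2)" "v2^2 = d2 * (1-q2)"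
    unfolding x1_def y1_def u1_def v1_def x2_def y2_def u2_def v2_def using d p1 q1 p2 q2 by auto
  have e: "d1 - 1 = x1^2 + u1^2" "d1 - 1 = y1^2 + v1^2" "d2 - 1 = x2^2 + u2^2" "d2 - 1 = y2^2 + v2^2"
    unfolding sq by (simp_all add: algebra_simps)
  have ww1: "\<bar>d1 * a1 - 1\<bar> \<le> x1 * y1"
  proof -
    have "\<bar>d1 * a1 - 1\<bar> = sqrt ((d1 * a1 - 1)^2)" by simp
    also have "\<dots> \<le> sqrt ((d1 * p1 - 1) * (d1 * q1 - 1))" by (rule real_sqrt_le_mono) (rule w1)
    finally show ?thesis unfolding x1_def y1_def by (simp add: real_sqrt_mult)
  qed
  have ww2: "\<bar>d2 * a2 - 1\<bar> \<le> x2 * y2"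
  proof -
    have "\<bar>d2 * a2 - 1\<bar> = sqrt ((d2 * a2 - 1)^2)" by simp
    also have "\<dots> \<le> sqrt ((d2 * p2 - 1) * (d2 * q2 - 1))" by (rule real_sqrt_le_mono) (rule w2)
    finally show ?thesis unfolding x2_def y2_def by (simp add: real_sqrt_mult)
  qed
  have m: "d1 - 1 \<ge> 1" "d2 - 1 \<ge> 1" using d by auto
  note C = core[OF m nn e ww1 ww2]
  have dd: "d1 * d2 \<ge> 2" proof -
    have "2 * 1 \<le> d1 * d2" by (rule mult_mono) (use d in auto)
    then show ?thesis by simp
  qed
  have i1: "u1^2+u2^2+(x1^2 * u2^2+u1^2 * x2^2+u1^2 * u2^2) = (d1 * d2) * (1-p1 * p2)"
    unfolding sq by (simp add: algebra_simps)
  have i2: "v1^2+v2^2+(y1^2 *  v2^2+v1^2 * y2^2+v1^2 *  v2^2) = (d1 * d2) * (1-q1 * q2)"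
    unfolding sq by (simp add: algebra_simps)
  have i3: "(d1-1)+(d2-1)+(d1-1) * (d2-1) = d1 * d2 - 1" by (simp add: algebra_simps)
  have i4: "(d1 * a1-1)+(d2 * a2-1)+(d1 * a1-1) * (d2 * a2-1) = d1 * d2 * (a1 * a2) - 1" by (simp add: algebra_simps)
  have "FC d1 a1 p1 q1  *  FC d2 a2 p2 q2 = ((d1-1)+(d1 * a1-1)+u1 *  v1)/(2 * (d1-1))  *  (((d2-1)+(d2 * a2-1)+u2 *  v2)/(2 * (d2-1)))"
    unfolding FC_alt[OF d(1)] FC_alt[OF d(2)] u1_def v1_def u2_def v2_def ..
  also have "\<dots> \<le> ((d1 * d2 - 1) + (d1 * d2 * (a1 * a2) - 1) + sqrt ((d1 * d2) * (1-p1 * p2))  *  sqrt ((d1 * d2) * (1-q1 * q2))) / (2 * (d1 * d2-1))"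
    using C unfolding i1 i2 i3 i4 by simp
  also have "\<dots> = FC (d1 * d2) (a1 * a2) (p1 * p2) (q1 * q2)"
    unfolding FC_alt[OF dd] ..
  finally show ?thesis .
qed



lemma if0_mult: "(x::complex) * (if P then y else 0) = (if P then x*y else 0)"
  "(if P then y else 0) * (x::complex) = (if P then y*x else 0)"
  "cnj (if P then y else 0) = (if P then cnj y else 0)"
  by auto

lemma qf2: fixes A :: "complex^'n^'n"
  shows "quad_form A (\<chi> k. (if k=i then \<alpha> else 0) + (if k=j then \<beta> else 0)) =
    cnj \<alpha>*A$i$i*\<alpha> + cnj \<alpha>*A$i$j*\<beta> + cnj \<beta>*A$j$i*\<alpha> + cnj \<beta>*A$j$j*\<beta>"
  unfolding quad_form_def
  by (simp add: distrib_left distrib_right sum.distrib if0_mult sum.delta)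

lemma psd_qf2:
  fixes A :: "complex^'n^'n"
  assumes "psd A"
  shows "Im (cnj \<alpha>*A$i$i*\<alpha> + cnj \<alpha>*A$i$j*\<beta> + cnj \<beta>*A$j$i*\<alpha> + cnj \<beta>*A$j$j*\<beta>) = 0"
    "Re (cnj \<alpha>*A$i$i*\<alpha> + cnj \<alpha>*A$i$j*\<beta> + cnj \<beta>*A$j$i*\<alpha> + cnj \<beta>*A$j$j*\<beta>) \<ge> 0"
  using assms unfolding psd_def qf2[symmetric] by auto

lemma psd_diag:
  fixes A :: "complex^'n^'n"
  assumes "psd A"
  shows "Im (A$i$i) = 0" "Re (A$i$i) \<ge> 0"
  using psd_qf2[OF assms, of 1 i i 0] by auto

lemma psd_herm:
  fixes A :: "complex^'n^'n"
  assumes "psd A"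
  shows "A$i$j = cnj (A$j$i)"
proof -
  have 1: "Im (A$i$j + A$j$i) = 0"
    using psd_qf2(1)[OF assms, of 1 i j 1] psd_diag[OF assms, of i] psd_diag[OF assms, of j] by simp
  have 2: "Re (A$i$j - A$j$i) = 0"
    using psd_qf2(1)[OF assms, of 1 i j \<i>] psd_diag[OF assms, of i] psd_diag[OF assms, of j] by simp
  show ?thesis using 1 2 by (simp add: complex_eq_iff)
qed

lemma quad_real_aux:
  fixes a b c :: real
  assumes "a \<ge> 0" "b \<ge> 0" "c \<ge> 0" and h: "\<And>t. t^2*a - 2*t*c + c*b \<ge> 0"
  shows "c \<le> a*b"
proof (cases "a = 0")
  case True
  with h[of "b+1"] assms show ?thesis by (simp add: algebra_simps) (smt (verit) mult_nonneg_nonneg)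
next
  case False
  then have a: "a > 0" using assms by auto
  have "(c/a)^2*a - 2*(c/a)*c + c*b \<ge> 0" by (rule h)
  then have "c*(a*b - c) \<ge> 0" using a by (simp add: field_simps power2_eq_square)
  then show ?thesis using assms
    by (cases "c = 0") (auto simp: zero_le_mult_iff)
qed

lemma psd_offdiag:
  fixes A :: "complex^'n^'n"
  assumes "psd A"
  shows "(cmod (A$i$j))^2 \<le> Re (A$i$i) * Re (A$j$j)"
proof -
  have hij: "A$i$j = cnj (A$j$i)" by (rule psd_herm[OF assms])
  have di: "Im (A$i$i) = 0" "Re (A$i$i) \<ge> 0" and dj: "Im (A$j$j) = 0" "Re (A$j$j) \<ge> 0"
    using psd_diag[OF assms] by auto
  define c where "c = (Re (A$j$i))^2 + (Im (A$j$i))^2"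
  have "\<And>t. t^2*Re (A$i$i) - 2*t*c + c*Re (A$j$j) \<ge> 0"
  proof -
    fix t :: real
    have "Re (cnj (of_real t)*A$i$i*(of_real t) + cnj (of_real t)*A$i$j*(- A$j$i) + cnj (- A$j$i)*A$j$i*(of_real t) + cnj (- A$j$i)*A$j$j*(- A$j$i)) \<ge> 0"
      by (rule psd_qf2(2)[OF assms])
    then show "t^2*Re (A$i$i) - 2*t*c + c*Re (A$j$j) \<ge> 0"
      unfolding hij c_def using di dj by (simp add: cmod_power2 power2_eq_square algebra_simps)
  qed
  then have "c \<le> Re (A$i$i) * Re (A$j$j)"
    using quad_real_aux[of "Re (A$i$i)" "Re (A$j$j)" c] di dj unfolding c_def by force
  moreover have "cmod (A$i$j) = cmod (A$j$i)" unfolding hij by simp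
  ultimately show ?thesis unfolding c_def by (simp add: cmod_power2)
qed

definition herm :: "complex^'n^'n \<Rightarrow> bool" where
  "herm A \<longleftrightarrow> (\<forall>i j. A$i$j = cnj (A$j$i))"

lemma psd_herm': "psd A \<Longrightarrow> herm A"
  unfolding herm_def by (intro allI) (erule psd_herm)

lemma hermD: "herm A \<Longrightarrow> A$i$j = cnj (A$j$i)"
  unfolding herm_def by (erule allE)+

lemma hermD': "herm A \<Longrightarrow> cnj (A$i$j) = A$j$i"
  using hermD[of A j i] by (metis complex_cnj_cnj)

lemma trace_mult_eq: "trace (A ** B) = (\<Sum>i\<in>UNIV. \<Sum>k\<in>UNIV. A$i$k * B$k$i)"
  by (simp add: trace_def matrix_matrix_mult_def)

lemma Re_trace_inner:
  fixes A B :: "complex^'n^'n"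
  assumes "herm B"
  shows "Re (trace (A ** B)) = inner A B"
proof -
  have "Re (trace (A ** B)) = (\<Sum>i\<in>UNIV. \<Sum>k\<in>UNIV. Re (A$i$k * cnj (B$i$k)))"
    unfolding trace_mult_eq Re_sum
    by (intro sum.cong refl) (simp only: hermD'[OF assms])
  also have "\<dots> = inner A B"
    by (simp add: inner_vec_def inner_complex_def)
  finally show ?thesis .
qed

lemma Im_trace_herm:
  fixes A B :: "complex^'n^'n"
  assumes "herm A" "herm B"
  shows "Im (trace (A ** B)) = 0"
proof -
  have "cnj (trace (A ** B)) = (\<Sum>i\<in>UNIV. \<Sum>k\<in>UNIV. A$k$i * B$i$k)"
    unfolding trace_mult_eq cnj_sum complex_cnj_mult
    by (intro sum.cong refl) (simp only: hermD'[OF assms(1)] hermD'[OF assms(2)])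
  also have "\<dots> = (\<Sum>k\<in>UNIV. \<Sum>i\<in>UNIV. A$k$i * B$i$k)" by (rule sum.swap)
  also have "\<dots> = trace (A ** B)" unfolding trace_mult_eq ..
  finally have "cnj (trace (A ** B)) = trace (A ** B)" .
  then have "Im (cnj (trace (A ** B))) = Im (trace (A ** B))" by simp
  then show ?thesis by simp
qed

lemma sum_UNIV_prod: "sum (f::('a::finite \<times> 'b::finite) \<Rightarrow> complex) UNIV = (\<Sum>i\<in>UNIV. \<Sum>k\<in>UNIV. f (i,k))"
  by (subst sum.cartesian_product) (simp add: case_prod_beta')

lemma trace_kron:
  fixes A C :: "complex^'n^'n" and B D :: "complex^'m^'m"
  shows "trace (kron A B ** kron C D) = trace (A ** C) * trace (B ** D)"
proof -
  have "trace (kron A B ** kron C D) = (\<Sum>p\<in>UNIV. \<Sum>q\<in>UNIV. (A$fst p$fst q * B$snd p$snd q) * (C$fst q$fst p * D$snd q$snd p))"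
    unfolding trace_mult_eq kron_def by simp
  also have "\<dots> = (\<Sum>i\<in>UNIV. \<Sum>k\<in>UNIV. \<Sum>q\<in>UNIV. (A$i$fst q * B$k$snd q) * (C$fst q$i * D$snd q$k))"
    by (subst sum_UNIV_prod) simp
  also have "\<dots> = (\<Sum>i\<in>UNIV. \<Sum>k\<in>UNIV. \<Sum>j\<in>UNIV. \<Sum>l\<in>UNIV. (A$i$j * B$k$l) * (C$j$i * D$l$k))"
    by (subst sum_UNIV_prod) simp
  also have "\<dots> = (\<Sum>i\<in>UNIV. \<Sum>k\<in>UNIV. \<Sum>j\<in>UNIV. \<Sum>l\<in>UNIV. (A$i$j * C$j$i) * (B$k$l * D$l$k))"
    by (simp add: algebra_simps)
  also have "\<dots> = trace (A ** C) * trace (B ** D)"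
    unfolding trace_mult_eq by (simp add: sum_product)
  finally show ?thesis .
qed

lemma inner_mat:
  fixes A :: "complex^'n^'n"
  shows "inner A (mat (of_real c)) = c * Re (trace A)"
  by (simp add: inner_vec_def mat_def inner_complex_def trace_def Re_sum sum_distrib_left
       if_distrib sum.delta mult.commute cong: if_cong)

lemma inner_mat_mat:
  "inner (mat (of_real c) :: complex^'n^'n) (mat (of_real c)) = real CARD('n) * c^2"
  unfolding inner_mat by (simp add: trace_def mat_def power2_eq_square)

lemma purity_le1:
  fixes A :: "complex^'n^'n"
  assumes "density_matrix A"
  shows "Re (trace (A ** A)) \<le> 1"
proof -
  have psd: "psd A" and tr: "trace A = 1" using assms unfolding density_matrix_def by auto
  have "Re (trace (A ** A)) = inner A A" by (rule Re_trace_inner[OF psd_herm'[OF psd]])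
  also have "\<dots> = (\<Sum>i\<in>UNIV. \<Sum>j\<in>UNIV. (cmod (A$i$j))^2)"
    by (simp only: inner_vec_def power2_norm_eq_inner)
  also have "\<dots> \<le> (\<Sum>i\<in>UNIV. \<Sum>j\<in>UNIV. Re (A$i$i) * Re (A$j$j))"
    by (intro sum_mono psd_offdiag[OF psd])
  also have "\<dots> = (Re (trace A))^2"
    by (simp add: trace_def Re_sum power2_eq_square sum_product)
  also have "\<dots> = 1" using tr by simp
  finally show ?thesis .
qed

lemma dens_cs:
  fixes A B :: "complex^'n^'n"
  assumes "density_matrix A" "density_matrix B"
  defines "d \<equiv> real CARD('n)"
  shows "1 \<le> d * Re (trace (A ** A))"
    and "(d * Re (trace (A ** B)) - 1)^2 \<le> (d * Re (trace (A ** A)) - 1) * (d * Re (trace (B ** B)) - 1)"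
proof -
  have hA: "herm A" and hB: "herm B" and tA: "Re (trace A) = 1" and tB: "Re (trace B) = 1"
    using assms psd_herm' unfolding density_matrix_def by auto
  have d0: "d > 0" unfolding d_def by simp
  define I :: "complex^'n^'n" where "I = mat (of_real (1/d))"
  have iAI: "inner A I = 1/d" "inner B I = 1/d" "inner I A = 1/d" "inner I B = 1/d"
    unfolding I_def using inner_mat[of A "1/d"] inner_mat[of B "1/d"] tA tB by (simp_all add: inner_commute)
  have iII: "inner I I = 1/d" unfolding I_def using inner_mat_mat[where c="1/d", where 'n='n] d0
    unfolding d_def by (simp add: power2_eq_square)
  have uv: "inner (A - I) (B - I) = Re (trace (A ** B)) - 1/d"
    using iAI iII Re_trace_inner[OF hB, of A] by (simp add: inner_diff_left inner_diff_right)
  have uu: "inner (A - I) (A - I) = Re (trace (A ** A)) - 1/d"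
    using iAI iII Re_trace_inner[OF hA, of A] by (simp add: inner_diff_left inner_diff_right)
  have vv: "inner (B - I) (B - I) = Re (trace (B ** B)) - 1/d"
    using iAI iII Re_trace_inner[OF hB, of B] by (simp add: inner_diff_left inner_diff_right)
  have "0 \<le> inner (A - I) (A - I)" by simp
  then show "1 \<le> d * Re (trace (A ** A))" using uu d0 by (simp add: field_simps)
  have cs: "(Re (trace (A ** B)) - 1/d)^2 \<le> (Re (trace (A ** A)) - 1/d) * (Re (trace (B ** B)) - 1/d)"
    using Cauchy_Schwarz_ineq[of "A - I" "B - I"] unfolding uv uu vv .
  have "(d * Re (trace (A ** B)) - 1)^2 = d^2 * (Re (trace (A ** B)) - 1/d)^2"
    using d0 by (simp add: field_simps power2_eq_square)
  also have "\<dots> \<le> d^2 * ((Re (trace (A ** A)) - 1/d) * (Re (trace (B ** B)) - 1/d))"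
    using cs by (intro mult_left_mono) auto
  also have "\<dots> = (d * Re (trace (A ** A)) - 1) * (d * Re (trace (B ** B)) - 1)"
    using d0 by (simp add: field_simps power2_eq_square)
  finally show "(d * Re (trace (A ** B)) - 1)^2 \<le> (d * Re (trace (A ** A)) - 1) * (d * Re (trace (B ** B)) - 1)" .
qed



lemma fid_FC:
  fixes A B :: "complex^'n^'n"
  shows "fidelity_C A B = FC (real CARD('n)) (Re (trace (A ** B))) (Re (trace (A ** A))) (Re (trace (B ** B)))"
  unfolding fidelity_C_def FC_def ..

lemma Re_tr_kron:
  fixes A C :: "complex^'n^'n" and B D :: "complex^'m^'m"
  assumes "herm A" "herm C"
  shows "Re (trace (kron A B ** kron C D)) = Re (trace (A ** C)) * Re (trace (B ** D))"
  unfolding trace_kron using Im_trace_herm[OF assms] by simp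

theorem theorem5:
  fixes \<rho>1 \<sigma>1 :: "complex^'n::finite^'n" and \<rho>2 \<sigma>2 :: "complex^'m::finite^'m"
  assumes "CARD('n) \<ge> 2" and "CARD('m) \<ge> 2"
    and "density_matrix \<rho>1" and "density_matrix \<sigma>1"
    and "density_matrix \<rho>2" and "density_matrix \<sigma>2"
  shows "fidelity_C (kron \<rho>1 \<rho>2) (kron \<sigma>1 \<sigma>2) \<ge> fidelity_C \<rho>1 \<sigma>1 * fidelity_C \<rho>2 \<sigma>2"
proof -
  have h: "herm \<rho>1" "herm \<sigma>1" "herm \<rho>2" "herm \<sigma>2"
    using assms(3-6) psd_herm' unfolding density_matrix_def by auto
  have d: "real CARD('n) \<ge> 2" "real CARD('m) \<ge> 2" using assms(1,2) by auto
  have card: "real CARD('n \<times> 'm) = real CARD('n) * real CARD('m)" by simp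
  note S = scalar[OF d dens_cs(1)[OF assms(3,4)] purity_le1[OF assms(3)]
      dens_cs(1)[OF assms(4,3)] purity_le1[OF assms(4)]
      dens_cs(1)[OF assms(5,6)] purity_le1[OF assms(5)]
      dens_cs(1)[OF assms(6,5)] purity_le1[OF assms(6)]
      dens_cs(2)[OF assms(3,4)] dens_cs(2)[OF assms(5,6)]]
  show ?thesis
    unfolding fid_FC card Re_tr_kron[OF h(1,2)] Re_tr_kron[OF h(1,1)] Re_tr_kron[OF h(2,2)]
    by (rule S)
qed

end
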